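(* Fix a distribution $\nu$ on $\mathcal{W}$ and let $\psi:(0,\infty)\to\mathbb{R}$ satisfy $\psi(t)\ge\mathbb{E}_{W\sim\nu}\big[e^{t(\ell(W,z)-\mathbb{E}_\nu[\ell(W,z)])}\big]$ for all $z\in\mathcal{Z}$ and $t>0$. Then for every $\lambda>0$, \[ \inf_{\pi\in U(\nu,(\mu')^{\otimes n})}\Big\{\mathbb{E}_\pi\big[L_\mu(W')-L_{S'}(W')\big]+\lambda D\big(\pi\,\|\,\nu\otimes(\mu')^{\otimes n}\big)\Big\}\ \ge\ \mathbb{E}_{W\sim\nu}\big[L_\mu(W)-L_{\mu'}(W)\big]-\lambda\big(\psi(1/(n\lambda))^n-1\big). \]
   Context: $\mathcal{Z},\mathcal{W}$ measurable spaces, $\ell:\mathcal{W}\times\mathcal{Z}\to[0,\infty)$ measurable loss, $\mu,\mu'$ distributions on $\mathcal{Z}$, $L_\mu(w)=\mathbb{E}_{Z\sim\mu}\ell(w,Z)$, $L_{\mu'}$ likewise, $L_s(w)=\frac1n\sum_{i=1}^n\ell(w,z_i)$. $U(\nu,(\mu')^{\otimes n})$ is the set of couplings of $\nu$ and $(\mu')^{\otimes n}$ on $\mathcal{W}\times\mathcal{Z}^n$, and $(W',S')\sim\pi$. $D$ is KL divergence. All expectations assumed finite. *)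

theory Defs
  imports "HOL-Probability.Probability"
begin

definition KL :: "'a measure \<Rightarrow> 'a measure \<Rightarrow> ereal" where
  "KL P Q = (if absolutely_continuous Q P \<and> sets P = sets Q \<and>
                 integrable P (entropy_density (exp 1) Q P)
             then ereal (KL_divergence (exp 1) Q P) else \<infinity>)"

text \<open>Couplings of nu and the n-fold product of mu' on W x Z^n (Z^n as functions on {..<n}).\<close>
definition couplings :: "'w measure \<Rightarrow> 'z measure \<Rightarrow> nat \<Rightarrow> ('w \<times> (nat \<Rightarrow> 'z)) measure set" where
  "couplings \<nu> \<mu>' n = {\<pi>. prob_space \<pi> \<and>
      sets \<pi> = sets (\<nu> \<Otimes>\<^sub>M PiM {..<n} (\<lambda>_. \<mu>')) \<and>
      distr \<pi> \<nu> fst = \<nu> \<and> distr \<pi> (PiM {..<n} (\<lambda>_. \<mu>')) snd = PiM {..<n} (\<lambda>_. \<mu>')}"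

end

theory Submission
  imports Defs
begin

lemma pointwise_ineq:
  fixes pr Phi u v lam :: real
  assumes "pr > 0" "lam > 0" "v \<le> u"
  shows "lam * ln pr - lam * Phi \<ge> lam * v + lam - lam * (exp (Phi + u) / pr)"
proof -
  define z where "z = exp (Phi + u) / pr"
  have zpos: "z > 0" using assms unfolding z_def by simp
  have "ln z = Phi + u - ln pr" unfolding z_def using assms by (simp add: ln_div)
  moreover have "ln z \<le> z - 1" using zpos by (rule ln_le_minus_one)
  ultimately have "ln pr - Phi - v \<ge> 1 - z" using assms by linarith
  then have "lam * (ln pr - Phi - v) \<ge> lam * (1 - z)" using assms by (intro mult_left_mono) auto
  then show ?thesis unfolding z_def by (simp add: algebra_simps)
qed

lemma ln_pow_le: fixes x :: real assumes "x > 0" shows "real n * ln x \<le> x ^ n - 1"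
proof -
  have "ln (x ^ n) = real n * ln x" using assms by (simp add: ln_realpow)
  moreover have "ln (x ^ n) \<le> x ^ n - 1" using assms by (intro ln_le_minus_one) simp
  ultimately show ?thesis by simp
qed

lemma ln_tangent: fixes x p :: real assumes "x > 0" "p > 0" shows "ln x \<le> x / p - 1 + ln p"
proof -
  have "ln (x / p) \<le> x / p - 1" using assms by (intro ln_le_minus_one) simp
  then show ?thesis using assms by (simp add: ln_div)
qed

lemma enn_enn2real_le: "ennreal (enn2real x) \<le> x"
  by (cases x rule: ennreal_cases) auto

lemma nn_integral_pos_prob:
  fixes g :: "'a \<Rightarrow> real"
  assumes "prob_space M" "g \<in> borel_measurable M" "\<And>x. x \<in> space M \<Longrightarrow> g x > 0"
  shows "(\<integral>\<^sup>+x. ennreal (g x) \<partial>M) > 0"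
proof (rule ccontr)
  interpret prob_space M by fact
  assume "\<not> ?thesis"
  then have "(\<integral>\<^sup>+x. ennreal (g x) \<partial>M) = 0" by (simp add: not_less)
  then have "AE x in M. ennreal (g x) = 0" using assms(2) by (subst (asm) nn_integral_0_iff_AE) auto
  then have "AE x in M. False" using AE_space by eventually_elim (use assms(3) in force)
  then show False by simp
qed

theorem lemma3:
  fixes loss :: "'w \<Rightarrow> 'z \<Rightarrow> real" and \<mu> \<mu>' :: "'z measure" and \<nu> :: "'w measure"
    and \<psi> :: "real \<Rightarrow> real" and n :: nat and lam :: real
  assumes "prob_space \<mu>" "prob_space \<mu>'" "sets \<mu>' = sets \<mu>" "prob_space \<nu>"
    and meas: "case_prod loss \<in> borel_measurable (\<nu> \<Otimes>\<^sub>M \<mu>)"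
    and nonneg: "\<And>w z. loss w z \<ge> 0"
    and int_mu: "\<And>w. w \<in> space \<nu> \<Longrightarrow> integrable \<mu> (loss w)"
    and int_mu': "\<And>w. w \<in> space \<nu> \<Longrightarrow> integrable \<mu>' (loss w)"
    and int_nu: "\<And>z. z \<in> space \<mu> \<Longrightarrow> integrable \<nu> (\<lambda>w. loss w z)"
    and int_L: "integrable \<nu> (\<lambda>w. \<integral>z. loss w z \<partial>\<mu>)" "integrable \<nu> (\<lambda>w. \<integral>z. loss w z \<partial>\<mu>')"
    and psi: "\<And>z t. z \<in> space \<mu> \<Longrightarrow> t > 0 \<Longrightarrow>
        (\<integral>\<^sup>+w. ennreal (exp (t * (loss w z - (\<integral>v. loss v z \<partial>\<nu>)))) \<partial>\<nu>) \<le> ennreal (\<psi> t)"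
    and "n > 0" and "lam > 0"
  shows "(INF \<pi> \<in> {\<pi> \<in> couplings \<nu> \<mu>' n.
            integrable \<pi> (\<lambda>(w, s). (\<integral>z. loss w z \<partial>\<mu>) - (\<Sum>i<n. loss w (s i)) / real n)}.
          ereal (\<integral>(w, s). (\<integral>z. loss w z \<partial>\<mu>) - (\<Sum>i<n. loss w (s i)) / real n \<partial>\<pi>)
          + ereal lam * KL \<pi> (\<nu> \<Otimes>\<^sub>M PiM {..<n} (\<lambda>_. \<mu>')))
       \<ge> ereal ((\<integral>w. (\<integral>z. loss w z \<partial>\<mu>) - (\<integral>z. loss w z \<partial>\<mu>') \<partial>\<nu>)
                - lam * (\<psi> (1 / (real n * lam)) ^ n - 1))"
proof -
  interpret mu': prob_space \<mu>' by fact
  interpret nu: prob_space \<nu> by fact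
  define P where "P = PiM {..<n} (\<lambda>_. \<mu>')"
  define Q where "Q = \<nu> \<Otimes>\<^sub>M P"
  interpret PP: product_prob_space "\<lambda>_. \<mu>'" "{..<n}"
    by unfold_locales
  have probP: "prob_space P" unfolding P_def by (rule prob_space_PiM) (rule mu'.prob_space_axioms)
  interpret P: prob_space P by fact
  interpret nuP: pair_prob_space \<nu> P ..
  interpret numu: pair_prob_space \<nu> \<mu>' ..
  have probQ: "prob_space Q" unfolding Q_def by (rule nuP.prob_space_axioms)
  interpret Q: prob_space Q by fact
  have space_mu': "space \<mu>' = space \<mu>" using \<open>sets \<mu>' = sets \<mu>\<close> by (rule sets_eq_imp_space_eq)
  have meas'[measurable]: "case_prod loss \<in> borel_measurable (\<nu> \<Otimes>\<^sub>M \<mu>')"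
    using meas by (subst measurable_cong_sets[OF sets_pair_measure_cong[OF refl \<open>sets \<mu>' = sets \<mu>\<close>] refl])
  define t where "t = 1 / (real n * lam)"
  have tpos: "t > 0" unfolding t_def using assms by simp
  define A where "A w = (\<integral>z. loss w z \<partial>\<mu>)" for w
  define B where "B w = (\<integral>z. loss w z \<partial>\<mu>')" for w
  define c where "c z = (\<integral>v. loss v z \<partial>\<nu>)" for z
  define h where "h w z = loss w z - c z" for w z
  define F where "F w = (\<integral>\<^sup>+z. ennreal (exp (t * h w z)) \<partial>\<mu>')" for w
  define f where "f w = enn2real (F w)" for w
  define ps where "ps = \<psi> t"
  define v where "v w = - real n * (f w / ps - 1 + ln ps)" for w
  define u where "u w = (if f w > 0 then - real n * ln (f w) else v w)" for w
  define Phi where "Phi x = t * (\<Sum>i<n. h (fst x) (snd x i))" for x :: "'w \<times> (nat \<Rightarrow> 'z)"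
  define y where "y x = Phi x + u (fst x)" for x
  have A_meas[measurable]: "A \<in> borel_measurable \<nu>"
  proof -
    interpret mu: prob_space \<mu> by fact
    show ?thesis unfolding A_def using meas by (rule mu.borel_measurable_lebesgue_integral)
  qed
  have B_meas[measurable]: "B \<in> borel_measurable \<nu>"
    unfolding B_def using meas' by (rule mu'.borel_measurable_lebesgue_integral)
  have c_meas[measurable]: "c \<in> borel_measurable \<mu>'"
    unfolding c_def by (rule nu.borel_measurable_lebesgue_integral) measurable
  have h_meas[measurable]: "case_prod h \<in> borel_measurable (\<nu> \<Otimes>\<^sub>M \<mu>')"
    unfolding h_def by measurable
  have F_meas[measurable]: "F \<in> borel_measurable \<nu>"
    unfolding F_def by measurable
  have f_meas[measurable]: "f \<in> borel_measurable \<nu>"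
    unfolding f_def by measurable
  have v_meas[measurable]: "v \<in> borel_measurable \<nu>"
    unfolding v_def by measurable
  have u_meas[measurable]: "u \<in> borel_measurable \<nu>"
    unfolding u_def by measurable
  have Phi_meas0[measurable]: "Phi \<in> borel_measurable (\<nu> \<Otimes>\<^sub>M P)"
    unfolding Phi_def P_def by measurable
  have y_meas0[measurable]: "y \<in> borel_measurable (\<nu> \<Otimes>\<^sub>M P)"
    unfolding y_def by measurable
  have Phi_meas[measurable]: "Phi \<in> borel_measurable Q" using Phi_meas0 unfolding Q_def .
  have y_meas[measurable]: "y \<in> borel_measurable Q" using y_meas0 unfolding Q_def .
  have F_int: "(\<integral>\<^sup>+w. F w \<partial>\<nu>) \<le> ennreal ps"
  proof -
    have "(\<integral>\<^sup>+w. F w \<partial>\<nu>) = (\<integral>\<^sup>+z. \<integral>\<^sup>+w. ennreal (exp (t * h w z)) \<partial>\<nu> \<partial>\<mu>')"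
      unfolding F_def by (rule numu.Fubini'[symmetric]) measurable
    also have "\<dots> \<le> (\<integral>\<^sup>+z. ennreal ps \<partial>\<mu>')"
      by (rule nn_integral_mono) (use psi tpos space_mu' in \<open>auto simp: h_def c_def ps_def\<close>)
    also have "\<dots> = ennreal ps" by (simp add: mu'.emeasure_space_1)
    finally show ?thesis .
  qed
  have ps_pos: "ps > 0"
  proof -
    obtain z where z: "z \<in> space \<mu>'" using mu'.not_empty by blast
    have "0 < (\<integral>\<^sup>+w. ennreal (exp (t * (loss w z - c z))) \<partial>\<nu>)"
      by (rule nn_integral_pos_prob) (use z in \<open>auto intro: nu.prob_space_axioms\<close>)
    also have "\<dots> \<le> ennreal ps" using psi[of z t] z tpos space_mu' unfolding c_def ps_def by auto
    finally show ?thesis by simp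
  qed
  have F_pos: "F w > 0" if "w \<in> space \<nu>" for w
    unfolding F_def by (rule nn_integral_pos_prob) (use that in \<open>auto intro: mu'.prob_space_axioms\<close>)
  have f_nn: "ennreal (f w) \<le> F w" for w unfolding f_def by (rule enn_enn2real_le)
  have f_nn_int: "(\<integral>\<^sup>+w. ennreal (f w) \<partial>\<nu>) \<le> ennreal ps"
    using nn_integral_mono[of \<nu> "\<lambda>w. ennreal (f w)" F] f_nn F_int by (meson order_trans)
  have f_int: "integrable \<nu> f"
    by (rule integrableI_nonneg) (use f_nn_int in \<open>auto simp: f_def intro: le_less_trans\<close>)
  have f_int_le: "(\<integral>w. f w \<partial>\<nu>) \<le> ps"
  proof -
    have "(\<integral>w. f w \<partial>\<nu>) = enn2real (\<integral>\<^sup>+w. ennreal (f w) \<partial>\<nu>)"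
      by (rule integral_eq_nn_integral) (auto simp: f_def)
    also have "\<dots> \<le> enn2real (ennreal ps)" by (rule enn2real_mono[OF f_nn_int]) simp
    finally show ?thesis using ps_pos by simp
  qed
  have v_int: "integrable \<nu> v" unfolding v_def using f_int by auto
  have v_eq: "(\<integral>w. v w \<partial>\<nu>) = - real n * ((\<integral>w. f w \<partial>\<nu>) / ps - 1 + ln ps)"
    unfolding v_def using f_int by (simp add: integral_diff integral_add nu.prob_space)
  have v_int_ge: "(\<integral>w. v w \<partial>\<nu>) \<ge> - real n * ln ps"
  proof -
    have "(\<integral>w. f w \<partial>\<nu>) / ps \<le> 1" using f_int_le ps_pos by simp
    then show ?thesis unfolding v_eq by (intro mult_left_mono_neg) auto
  qed
  have u_ge_v: "v w \<le> u w" for w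
  proof (cases "f w > 0")
    case True
    then have "ln (f w) \<le> f w / ps - 1 + ln ps" using ps_pos by (rule ln_tangent)
    then have "- real n * (f w / ps - 1 + ln ps) \<le> - real n * ln (f w)"
      by (intro mult_left_mono_neg) auto
    then show ?thesis using True unfolding u_def v_def by simp
  next
    case False then show ?thesis unfolding u_def by simp
  qed
  have inner: "(\<integral>\<^sup>+s. ennreal (exp (y (w, s))) \<partial>P) = ennreal (exp (u w)) * F w ^ n"
    if w: "w \<in> space \<nu>" for w
  proof -
    have [measurable]: "(\<lambda>z. h w z) \<in> borel_measurable \<mu>'"
      using w by measurable
    have "(\<integral>\<^sup>+s. ennreal (exp (y (w, s))) \<partial>P)
        = (\<integral>\<^sup>+s. ennreal (exp (u w)) * (\<Prod>i\<in>{..<n}. ennreal (exp (t * h w (s i)))) \<partial>P)"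
    proof (rule nn_integral_cong)
      fix s
      have "exp (y (w, s)) = exp (u w) * (\<Prod>i\<in>{..<n}. exp (t * h w (s i)))"
        unfolding y_def Phi_def by (simp add: exp_add sum_distrib_left exp_sum mult.commute)
      then show "ennreal (exp (y (w, s))) = ennreal (exp (u w)) * (\<Prod>i\<in>{..<n}. ennreal (exp (t * h w (s i))))"
        by (simp add: prod_ennreal ennreal_mult prod_nonneg)
    qed
    also have "\<dots> = ennreal (exp (u w)) * (\<integral>\<^sup>+s. (\<Prod>i\<in>{..<n}. ennreal (exp (t * h w (s i)))) \<partial>P)"
      by (rule nn_integral_cmult) (unfold P_def, measurable)
    also have "(\<integral>\<^sup>+s. (\<Prod>i\<in>{..<n}. ennreal (exp (t * h w (s i)))) \<partial>P) = (\<Prod>i\<in>{..<n}. F w)"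
      unfolding P_def F_def by (rule PP.product_nn_integral_prod) auto
    finally show ?thesis by simp
  qed
  have F_fin: "AE w in \<nu>. F w \<noteq> \<infinity>"
    by (rule nn_integral_PInf_AE) (use F_int in \<open>auto simp: top_unique\<close>)
  have exp_y: "(\<integral>\<^sup>+x. ennreal (exp (y x)) \<partial>Q) \<le> 1"
  proof -
    have "(\<integral>\<^sup>+x. ennreal (exp (y x)) \<partial>Q) = (\<integral>\<^sup>+w. \<integral>\<^sup>+s. ennreal (exp (y (w, s))) \<partial>P \<partial>\<nu>)"
      unfolding Q_def by (rule P.nn_integral_fst[symmetric]) measurable
    also have "\<dots> = (\<integral>\<^sup>+w. ennreal (exp (u w)) * F w ^ n \<partial>\<nu>)"
      by (rule nn_integral_cong) (simp add: inner)
    also have "\<dots> \<le> (\<integral>\<^sup>+w. 1 \<partial>\<nu>)"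
    proof (rule nn_integral_mono_AE)
      show "AE w in \<nu>. ennreal (exp (u w)) * F w ^ n \<le> 1"
        using F_fin AE_space
      proof eventually_elim
        case (elim w)
        then have Fw: "F w = ennreal (f w)" unfolding f_def by (simp add: less_top)
        have fpos: "f w > 0" using F_pos[OF elim(2)] Fw by simp
        have e: "exp (real n * ln (f w)) = f w ^ n" using fpos by (simp add: exp_of_nat_mult)
        have "exp (u w) * f w ^ n = 1"
          using fpos by (simp add: u_def exp_minus e field_simps)
        then show ?case using fpos by (simp add: Fw ennreal_power ennreal_mult[symmetric])
      qed
    qed
    also have "\<dots> = 1" by (simp add: nu.emeasure_space_1)
    finally show ?thesis .
  qed
  have loss_int: "integrable (\<nu> \<Otimes>\<^sub>M \<mu>') (case_prod loss)"
  proof (rule integrableI_nonneg)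
    show "case_prod loss \<in> borel_measurable (\<nu> \<Otimes>\<^sub>M \<mu>')" by measurable
    show "AE x in \<nu> \<Otimes>\<^sub>M \<mu>'. 0 \<le> case_prod loss x" by (auto simp: nonneg)
    have "(\<integral>\<^sup>+x. ennreal (case_prod loss x) \<partial>(\<nu> \<Otimes>\<^sub>M \<mu>')) = (\<integral>\<^sup>+w. \<integral>\<^sup>+z. ennreal (loss w z) \<partial>\<mu>' \<partial>\<nu>)"
      by (subst mu'.nn_integral_fst[symmetric]) (simp_all add: measurable_compose[OF meas' measurable_ennreal])
    also have "\<dots> = (\<integral>\<^sup>+w. ennreal (B w) \<partial>\<nu>)"
      by (rule nn_integral_cong) (simp add: B_def nn_integral_eq_integral int_mu' nonneg)
    also have "\<dots> = ennreal (\<integral>w. B w \<partial>\<nu>)"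
      by (rule nn_integral_eq_integral) (use int_L(2) in \<open>auto simp: B_def nonneg\<close>)
    finally show "(\<integral>\<^sup>+x. ennreal (case_prod loss x) \<partial>(\<nu> \<Otimes>\<^sub>M \<mu>')) < \<infinity>" by simp
  qed
  have c_int: "integrable \<mu>' c" unfolding c_def by (rule numu.integrable_snd[OF loss_int])
  have c_eq: "(\<integral>z. c z \<partial>\<mu>') = (\<integral>w. B w \<partial>\<nu>)"
    unfolding c_def B_def by (rule numu.Fubini_integral[OF loss_int])
  have main: "ereal (\<integral>(w, s). A w - (\<Sum>i<n. loss w (s i)) / real n \<partial>\<pi>) + ereal lam * KL \<pi> Q
     \<ge> ereal ((\<integral>w. A w - B w \<partial>\<nu>) - lam * (ps ^ n - 1))"
    if "\<pi> \<in> couplings \<nu> \<mu>' n" and Gint0: "integrable \<pi> (\<lambda>(w, s). A w - (\<Sum>i<n. loss w (s i)) / real n)" for \<pi>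
  proof (cases "absolutely_continuous Q \<pi> \<and> sets \<pi> = sets Q \<and> integrable \<pi> (entropy_density (exp 1) Q \<pi>)")
    case False
    then have "KL \<pi> Q = \<infinity>" unfolding KL_def by auto
    then show ?thesis using \<open>lam > 0\<close> by simp
  next
    case True
    then have ac: "absolutely_continuous Q \<pi>" and sets_pi: "sets \<pi> = sets Q"
      and entint: "integrable \<pi> (entropy_density (exp 1) Q \<pi>)" by auto
    have cpl: "prob_space \<pi>" "distr \<pi> \<nu> fst = \<nu>" "distr \<pi> P snd = P"
      using that(1) unfolding couplings_def P_def by auto
    interpret pi: prob_space \<pi> by fact
    have KLeq: "KL \<pi> Q = ereal (KL_divergence (exp 1) Q \<pi>)" using True unfolding KL_def by simp
    have fst_meas[measurable]: "fst \<in> measurable \<pi> \<nu>"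
      using measurable_fst[of \<nu> P] by (subst measurable_cong_sets[OF sets_pi refl]) (simp add: Q_def)
    have snd_meas[measurable]: "snd \<in> measurable \<pi> P"
      using measurable_snd[of \<nu> P] by (subst measurable_cong_sets[OF sets_pi refl]) (simp add: Q_def)
    define p where "p = RN_deriv Q \<pi>"
    define pr where "pr x = enn2real (p x)" for x
    have p_meas[measurable]: "p \<in> borel_measurable Q" unfolding p_def by (rule borel_measurable_RN_deriv)
    have pr_meas[measurable]: "pr \<in> borel_measurable Q" unfolding pr_def by measurable
    have dens: "density Q p = \<pi>" unfolding p_def by (rule Q.density_RN_deriv[OF ac sets_pi])
    have p_fin: "AE x in Q. p x \<noteq> \<infinity>" unfolding p_def
      by (rule Q.RN_deriv_finite[OF _ ac sets_pi]) (rule pi.sigma_finite_measure_axioms)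
    have "AE x in density Q p. pr x > 0"
      by (subst AE_density[OF p_meas]) (use p_fin in \<open>eventually_elim, auto simp: pr_def enn2real_positive_iff less_top\<close>)
    then have pr_pos: "AE x in \<pi>. pr x > 0" unfolding dens .
    define R where "R x = (if pr x > 0 then exp (y x) / pr x else 0)" for x
    have R_measQ[measurable]: "R \<in> borel_measurable Q" unfolding R_def by measurable
    have R_meas[measurable]: "R \<in> borel_measurable \<pi>" using R_measQ by (subst measurable_cong_sets[OF sets_pi refl])
    have R_nn: "(\<integral>\<^sup>+x. ennreal (R x) \<partial>\<pi>) \<le> 1"
    proof -
      have "(\<integral>\<^sup>+x. ennreal (R x) \<partial>\<pi>) = (\<integral>\<^sup>+x. p x * ennreal (R x) \<partial>Q)"
        unfolding p_def by (rule Q.RN_deriv_nn_integral[OF ac sets_pi]) measurable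
      also have "\<dots> \<le> (\<integral>\<^sup>+x. ennreal (exp (y x)) \<partial>Q)"
      proof (rule nn_integral_mono)
        fix x
        show "p x * ennreal (R x) \<le> ennreal (exp (y x))"
        proof (cases "pr x > 0")
          case True
          then have "p x \<noteq> \<infinity>" unfolding pr_def by auto
          then have "p x = ennreal (pr x)" unfolding pr_def by (simp add: less_top)
          then show ?thesis using True by (simp add: R_def ennreal_mult[symmetric])
        qed (simp add: R_def)
      qed
      also have "\<dots> \<le> 1" by (rule exp_y)
      finally show ?thesis .
    qed
    have R_int: "integrable \<pi> R"
      by (rule integrableI_nonneg[OF R_meas]) (use R_nn in \<open>auto simp: R_def intro: le_less_trans\<close>)
    have R_int_le: "(\<integral>x. R x \<partial>\<pi>) \<le> 1"
    proof -
      have "(\<integral>x. R x \<partial>\<pi>) = enn2real (\<integral>\<^sup>+x. ennreal (R x) \<partial>\<pi>)"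
        by (rule integral_eq_nn_integral[OF R_meas]) (auto simp: R_def)
      also have "\<dots> \<le> enn2real 1" by (rule enn2real_mono[OF R_nn]) simp
      finally show ?thesis by simp
    qed
    have ent_eq: "entropy_density (exp 1) Q \<pi> = (\<lambda>x. ln (pr x))"
      by (auto simp: entropy_density_def log_def fun_eq_iff pr_def p_def)
    have ln_int: "integrable \<pi> (\<lambda>x. ln (pr x))" using entint unfolding ent_eq .
    have KLdiv: "KL_divergence (exp 1) Q \<pi> = (\<integral>x. ln (pr x) \<partial>\<pi>)"
      unfolding KL_divergence_def ent_eq ..
    define G where "G x = A (fst x) - (\<Sum>i<n. loss (fst x) (snd x i)) / real n" for x
    have G_eq: "(\<lambda>(w, s). A w - (\<Sum>i<n. loss w (s i)) / real n) = G"
      by (auto simp: G_def fun_eq_iff)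
    have G_int: "integrable \<pi> G" using Gint0 unfolding G_eq .
    define L where "L x = A (fst x) - (\<Sum>i<n. c (snd x i)) / real n + lam * v (fst x) + lam - lam * R x" for x
    have A_int: "integrable \<pi> (\<lambda>x. A (fst x))"
      using int_L(1) cpl(2) integrable_distr_eq[OF fst_meas A_meas] unfolding A_def by simp
    have v_int': "integrable \<pi> (\<lambda>x. v (fst x))"
      using v_int cpl(2) integrable_distr_eq[OF fst_meas v_meas] by simp
    have comp: "distr P \<mu>' (\<lambda>s. s i) = \<mu>'" if "i < n" for i
      unfolding P_def by (rule distr_PiM_component) (use that mu'.prob_space_axioms in auto)
    have ci_meas[measurable]: "(\<lambda>s. s i) \<in> measurable P \<mu>'" if "i < n" for i
      unfolding P_def by (rule measurable_component_singleton) (use that in simp)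
    have cP_int: "integrable P (\<lambda>s. c (s i))" if "i < n" for i
      using c_int comp[OF that] integrable_distr_eq[OF ci_meas[OF that] c_meas] by simp
    have cP_eq: "(\<integral>s. c (s i) \<partial>P) = (\<integral>z. c z \<partial>\<mu>')" if "i < n" for i
      using comp[OF that] integral_distr[OF ci_meas[OF that] c_meas] by simp
    have cP_meas[measurable]: "(\<lambda>s. c (s i)) \<in> borel_measurable P" if "i < n" for i
      using measurable_compose[OF ci_meas[OF that] c_meas] .
    have c_pi_int: "integrable \<pi> (\<lambda>x. c (snd x i))" if "i < n" for i
      using cP_int[OF that] cpl(3) integrable_distr_eq[OF snd_meas cP_meas[OF that]] by simp
    have c_pi_eq: "(\<integral>x. c (snd x i) \<partial>\<pi>) = (\<integral>z. c z \<partial>\<mu>')" if "i < n" for i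
      using cP_eq[OF that] cpl(3) integral_distr[OF snd_meas cP_meas[OF that]] by simp
    have csum_int: "integrable \<pi> (\<lambda>x. (\<Sum>i<n. c (snd x i)) / real n)"
      using c_pi_int by (intro integrable_divide integrable_sum) auto
    have csum_eq: "(\<integral>x. (\<Sum>i<n. c (snd x i)) / real n \<partial>\<pi>) = (\<integral>z. c z \<partial>\<mu>')"
      using c_pi_int c_pi_eq \<open>n > 0\<close> by (simp add: integral_sum)
    have csum_eq2: "(\<integral>x. (\<Sum>i<n. c (snd x i)) \<partial>\<pi>) / real n = (\<integral>z. c z \<partial>\<mu>')"
      using csum_eq by simp
    have A_eq: "(\<integral>x. A (fst x) \<partial>\<pi>) = (\<integral>w. A w \<partial>\<nu>)"
      using cpl(2) integral_distr[OF fst_meas A_meas] by simp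
    have v_eq': "(\<integral>x. v (fst x) \<partial>\<pi>) = (\<integral>w. v w \<partial>\<nu>)"
      using cpl(2) integral_distr[OF fst_meas v_meas] by simp
    have L_int: "integrable \<pi> L"
      unfolding L_def using A_int csum_int v_int' R_int by auto
    have L_eq: "(\<integral>x. L x \<partial>\<pi>) = (\<integral>w. A w \<partial>\<nu>) - (\<integral>z. c z \<partial>\<mu>') + lam * (\<integral>w. v w \<partial>\<nu>) + lam - lam * (\<integral>x. R x \<partial>\<pi>)"
      unfolding L_def using A_int csum_int v_int' R_int
      by (simp add: integral_diff integral_add A_eq csum_eq2 v_eq' pi.prob_space)
    have pw: "AE x in \<pi>. L x \<le> G x + lam * ln (pr x)"
      using pr_pos
    proof eventually_elim
      case (elim x)
      have ineq: "lam * ln (pr x) - lam * Phi x \<ge> lam * v (fst x) + lam - lam * (exp (Phi x + u (fst x)) / pr x)"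
        by (rule pointwise_ineq) (use elim \<open>lam > 0\<close> u_ge_v in auto)
      have lt: "lam * t = 1 / real n" unfolding t_def using \<open>lam > 0\<close> by simp
      have "lam * Phi x = (\<Sum>i<n. loss (fst x) (snd x i)) / real n - (\<Sum>i<n. c (snd x i)) / real n"
        unfolding Phi_def h_def by (simp add: sum_subtractf mult.assoc[symmetric] lt diff_divide_distrib)
      then show ?case using ineq elim unfolding L_def G_def R_def y_def by simp
    qed
    have "(\<integral>x. L x \<partial>\<pi>) \<le> (\<integral>x. G x + lam * ln (pr x) \<partial>\<pi>)"
      by (rule integral_mono_AE[OF L_int _ pw]) (use G_int ln_int in auto)
    also have "\<dots> = (\<integral>x. G x \<partial>\<pi>) + lam * KL_divergence (exp 1) Q \<pi>"
      using G_int ln_int by (simp add: KLdiv)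
    finally have main_ineq: "(\<integral>x. L x \<partial>\<pi>) \<le> (\<integral>x. G x \<partial>\<pi>) + lam * KL_divergence (exp 1) Q \<pi>" .
    have "(\<integral>w. A w - B w \<partial>\<nu>) - lam * (ps ^ n - 1) \<le> (\<integral>x. L x \<partial>\<pi>)"
    proof -
      have AB: "(\<integral>w. A w - B w \<partial>\<nu>) = (\<integral>w. A w \<partial>\<nu>) - (\<integral>w. B w \<partial>\<nu>)"
        using int_L unfolding A_def B_def by (simp add: integral_diff)
      have "lam * (real n * ln ps) \<le> lam * (ps ^ n - 1)"
        using ln_pow_le[OF ps_pos, of n] \<open>lam > 0\<close> by (intro mult_left_mono) auto
      moreover have "lam * (\<integral>w. v w \<partial>\<nu>) \<ge> lam * (- real n * ln ps)"
        using v_int_ge \<open>lam > 0\<close> by (intro mult_left_mono) auto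
      moreover have "lam * (\<integral>x. R x \<partial>\<pi>) \<le> lam" using R_int_le \<open>lam > 0\<close> by simp
      ultimately show ?thesis unfolding L_eq AB c_eq by (simp add: algebra_simps)
    qed
    then show ?thesis using main_ineq unfolding KLeq G_eq by simp
  qed
  show ?thesis
    using main unfolding A_def B_def Q_def P_def ps_def t_def by (auto intro!: INF_greatest)
qed

end
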